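(* Let $\alpha$ and $F_\alpha$ be as in the context. Then $F_\alpha$ is exact (with respect to Lebesgue measure $\lambda$, equivalently with respect to the $\lambda$-equivalent invariant measure $\nu_\alpha$ with density $\sum_n (t_n/a_n)\mathbbm 1_{A_n}$).
   Context: Let $\mathcal U=[0,1]$ with Borel $\sigma$-algebra $\mathcal B$ and Lebesgue measure $\lambda$. $\alpha=\{A_n:n\in\mathbb N\}$ is a countable partition of $\mathcal U$ (up to the point $0$) into left-open, right-closed intervals of positive length, ordered from right to left starting with $A_1$, accumulating only at $0$; $a_n:=\lambda(A_n)$, $t_n:=\sum_{k\ge n}a_k$, $A_n=(t_{n+1},t_n]$. $F_\alpha(x)=(1-x)/a_1$ on $A_1$, $F_\alpha(x)=a_{n-1}(x-t_{n+1})/a_n+t_n$ on $A_n$ ($n\ge2$), $F_\alpha(0)=0$. A non-singular transformation $T$ of a $\sigma$-finite measure space $(\mathcal U,\mathcal B,\mu)$ is exact if for each $B\in\bigcap_{n\in\mathbb N}T^{-n}(\mathcal B)$ either $\mu(B)=0$ or $\mu(\mathcal U\setminus B)=0$. *)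

theory Defs
  imports "HOL-Analysis.Analysis"
begin

text \<open>The partition is given by the lengths a n (n >= 1) of the intervals A_n; the
value a 0 is irrelevant. t_n = sum_{k >= n} a_k and A_n = (t_{n+1}, t_n].\<close>

definition tail :: "(nat \<Rightarrow> real) \<Rightarrow> nat \<Rightarrow> real" where
  "tail a n = (\<Sum>k. a (k + n))"

definition part_int :: "(nat \<Rightarrow> real) \<Rightarrow> nat \<Rightarrow> real set" where
  "part_int a n = {tail a (Suc n)<..tail a n}"

definition F_alpha :: "(nat \<Rightarrow> real) \<Rightarrow> real \<Rightarrow> real" where
  "F_alpha a x =
     (if x = 0 then 0
      else if x \<in> part_int a 1 then (1 - x) / a 1
      else (let n = (THE n. n \<ge> 2 \<and> x \<in> part_int a n)
            in a (n - 1) * (x - tail a (Suc n)) / a n + tail a n))"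

definition U_meas :: "real measure" where
  "U_meas = restrict_space lborel {0..1}"

definition nonsingular :: "'a measure \<Rightarrow> ('a \<Rightarrow> 'a) \<Rightarrow> bool" where
  "nonsingular M T \<longleftrightarrow> T \<in> measurable M M \<and>
     (\<forall>A\<in>sets M. emeasure M (T -` A \<inter> space M) = 0 \<longleftrightarrow> emeasure M A = 0)"

definition exact_transf :: "'a measure \<Rightarrow> ('a \<Rightarrow> 'a) \<Rightarrow> bool" where
  "exact_transf M T \<longleftrightarrow> nonsingular M T \<and>
     (\<forall>B. (\<forall>n. \<exists>C\<in>sets M. B = (T ^^ n) -` C \<inter> space M) \<longrightarrow>
          emeasure M B = 0 \<or> emeasure M (space M - B) = 0)"

end

theory Submission
  imports Defs
begin

locale alf =
  fixes a :: "nat \<Rightarrow> real"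
  assumes pos: "\<And>n. n \<ge> 1 \<Longrightarrow> a n > 0"
    and total: "(\<lambda>k. a (Suc k)) sums 1"
begin

abbreviation "t \<equiv> tail a"
abbreviation "A \<equiv> part_int a"
abbreviation "F \<equiv> F_alpha a"

lemma summ_shift: "summable (\<lambda>k. a (k + n))"
proof -
  have s1: "summable (\<lambda>k. a (Suc k))" using total sums_summable by blast
  hence "summable a" using summable_Suc_iff by blast
  thus ?thesis using summable_iff_shift[of a n] by simp
qed

lemma t_rec: "t n = a n + t (Suc n)"
proof -
  have "t n = (\<Sum>k. a (k + n))" by (simp add: tail_def)
  also have "\<dots> = (\<Sum>k. a (Suc k + n)) + a n"
    using suminf_split_head[OF summ_shift[of n]] by simp
  also have "(\<Sum>k. a (Suc k + n)) = t (Suc n)" by (simp add: tail_def)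
  finally show ?thesis by simp
qed

lemma t1: "t 1 = 1"
  using sums_unique[OF total] by (simp add: tail_def)

lemma t_pos: "n \<ge> 1 \<Longrightarrow> t n > 0"
proof -
  assume n: "n \<ge> 1"
  have "0 < (\<Sum>k. a (k + n))"
    by (rule suminf_pos[OF summ_shift]) (use n pos in auto)
  thus ?thesis by (simp add: tail_def)
qed

lemma t_Suc_formula: "t (Suc n) = 1 - (\<Sum>k<n. a (Suc k))"
proof (induction n)
  case 0 then show ?case using t1 by simp
next
  case (Suc n) then show ?case using t_rec[of "Suc n"] by simp
qed

lemma t_lim: "(\<lambda>n. t (Suc n)) \<longlonglongrightarrow> 0"
proof -
  have "(\<lambda>n. \<Sum>k<n. a (Suc k)) \<longlonglongrightarrow> 1" using total by (simp add: sums_def)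
  hence "(\<lambda>n. 1 - (\<Sum>k<n. a (Suc k))) \<longlonglongrightarrow> 1 - 1" by (intro tendsto_intros)
  thus ?thesis by (simp add: t_Suc_formula)
qed

lemma t_mono: assumes "1 \<le> n" "n \<le> m" shows "t m \<le> t n"
  using assms(2)
proof (induction rule: dec_induct)
  case base then show ?case by simp
next
  case (step m) then show ?case using t_rec[of m] pos[of m] assms(1) by simp
qed

lemma t_le1: "1 \<le> n \<Longrightarrow> t n \<le> 1"
  using t_mono[of 1 n] t1 by simp

lemma t_nonneg: "1 \<le> n \<Longrightarrow> 0 \<le> t n"
  using t_pos by (simp add: less_imp_le)

lemma A_sub: "1 \<le> n \<Longrightarrow> A n \<subseteq> {0<..1}"
  using t_le1[of n] t_nonneg[of "Suc n"] by (auto simp: part_int_def)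

lemma A_disj: "1 \<le> n \<Longrightarrow> 1 \<le> m \<Longrightarrow> x \<in> A n \<Longrightarrow> x \<in> A m \<Longrightarrow> n = m"
proof (rule ccontr)
  assume h: "1 \<le> n" "1 \<le> m" "x \<in> A n" "x \<in> A m" "n \<noteq> m"
  { fix p q assume "1 \<le> p" "p < q" "x \<in> A p" "x \<in> A q"
    hence "t q \<le> t (Suc p)" using t_mono[of "Suc p" q] by simp
    with \<open>x \<in> A p\<close> \<open>x \<in> A q\<close> have False by (auto simp: part_int_def) }
  with h show False by (metis linorder_neqE_nat)
qed

lemma A_ex: "0 < x \<Longrightarrow> x \<le> 1 \<Longrightarrow> \<exists>n\<ge>1. x \<in> A n"
proof -
  assume x: "0 < x" "x \<le> 1"
  from t_lim x(1) have "eventually (\<lambda>n. t (Suc n) < x) sequentially"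
    by (simp add: order_tendstoD(2))
  then obtain N where N: "t (Suc N) < x" by (auto simp: eventually_sequentially)
  define n where "n = (LEAST n. t (Suc n) < x)"
  have n1: "t (Suc n) < x" using N unfolding n_def by (rule LeastI)
  have n0: "n \<noteq> 0" using n1 x t1 by (cases n) auto
  then obtain m where m: "n = Suc m" by (cases n) auto
  have "\<not> t (Suc m) < x" using m n_def not_less_Least by (metis lessI)
  hence "x \<le> t n" using m by simp
  with n1 n0 show ?thesis by (intro exI[of _ n]) (auto simp: part_int_def)
qed

lemma F_A1: "x \<in> A 1 \<Longrightarrow> F x = (1 - x) / a 1"
  using A_sub[of 1] by (auto simp: F_alpha_def)

lemma F_An: "2 \<le> n \<Longrightarrow> x \<in> A n \<Longrightarrow> F x = a (n - 1) * (x - t (Suc n)) / a n + t n"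
proof -
  assume n: "2 \<le> n" "x \<in> A n"
  have x0: "x \<noteq> 0" using A_sub[of n] n by auto
  have x1: "x \<notin> A 1" using A_disj[of n 1 x] n by auto
  have th: "(THE m. m \<ge> 2 \<and> x \<in> A m) = n"
    by (rule the_equality) (use n A_disj[of _ n x] in auto)
  show ?thesis using x0 x1 th by (simp add: F_alpha_def Let_def)
qed


lemma A1_eq: "A 1 = {t 2<..1}"
  using t1 by (simp add: part_int_def numeral_2_eq_2)

lemma t12: "t 2 = 1 - a 1"
  using t_rec[of 1] t1 by (simp add: numeral_2_eq_2)

lemma F_A1_range: "x \<in> A 1 \<Longrightarrow> F x \<in> {0..<1}"
proof -
  assume x: "x \<in> A 1"
  have a1: "a 1 > 0" using pos by simp
  have "t 2 < x" "x \<le> 1" using x A1_eq by auto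
  hence "1 - x < a 1" "0 \<le> 1 - x" using t12 by auto
  hence "(1 - x) / a 1 < 1" "0 \<le> (1 - x) / a 1" using a1 by (simp_all add: pos_divide_less_eq)
  thus ?thesis using F_A1[OF x] by simp
qed

lemma F_An_range: "2 \<le> n \<Longrightarrow> x \<in> A n \<Longrightarrow> F x \<in> A (n - 1)"
proof -
  assume n: "2 \<le> n" and x: "x \<in> A n"
  have an: "a n > 0" and an1: "a (n - 1) > 0" using pos n by auto
  have tn: "t (n - 1) = a (n - 1) + t n" using t_rec[of "n - 1"] n by simp
  have tn1: "t n = a n + t (Suc n)" using t_rec[of n] .
  have x1: "t (Suc n) < x" "x \<le> t n" using x by (auto simp: part_int_def)
  have "0 < x - t (Suc n)" "x - t (Suc n) \<le> a n"
    using x1 tn1 by auto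
  hence "a (n - 1) * (x - t (Suc n)) \<le> a (n - 1) * a n" "0 < a (n - 1) * (x - t (Suc n))"
    using an1 by (auto intro: mult_left_mono)
  hence "0 < a (n - 1) * (x - t (Suc n)) / a n" "a (n - 1) * (x - t (Suc n)) / a n \<le> a (n - 1)"
    using an by (auto simp: pos_divide_le_eq)
  thus ?thesis using F_An[OF n x] tn n by (auto simp: part_int_def Suc_diff_Suc numeral_2_eq_2)
qed

lemma F_range: "x \<in> {0..1} \<Longrightarrow> F x \<in> {0..1}"
proof -
  assume x: "x \<in> {0..1}"
  show ?thesis
  proof (cases "x = 0")
    case True then show ?thesis by (simp add: F_alpha_def)
  next
    case False
    hence "0 < x" "x \<le> 1" using x by auto
    then obtain n where n: "n \<ge> 1" "x \<in> A n" using A_ex by blast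
    show ?thesis
    proof (cases "n = 1")
      case True
      hence "F x \<in> {0..<1}" using F_A1_range n by simp
      thus ?thesis by auto
    next
      case False
      hence "F x \<in> A (n - 1)" using F_An_range n by auto
      moreover have "A (n - 1) \<subseteq> {0<..1}" using A_sub[of "n - 1"] False n by auto
      ultimately show ?thesis by auto
    qed
  qed
qed

lemma Fn_range: "x \<in> {0..1} \<Longrightarrow> (F ^^ n) x \<in> {0..1}"
proof (induction n)
  case (Suc n)
  then show ?case using F_range[of "(F ^^ n) x"] by simp
qed simp

lemma alg: fixes ak b tk tk1 T x :: real
  assumes "ak > 0" "b > 0" "tk = ak + tk1" "tk1 = b + T"
  shows "(tk - (ak * (x - T) / b + tk1)) / ak = (tk1 - x) / b"
proof -
  have "tk - (ak * (x - T) / b + tk1) = ak * ((tk1 - x) / b)"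
    using assms by (simp add: field_simps)
  thus ?thesis using assms by simp
qed

lemma Fk_A: "1 \<le> k \<Longrightarrow> x \<in> A k \<Longrightarrow> (F ^^ k) x = (t k - x) / a k"
proof (induction k arbitrary: x rule: dec_induct)
  case base
  then show ?case using F_A1 t1 by simp
next
  case (step k)
  have k2: "2 \<le> Suc k" using step by simp
  have Fx: "F x \<in> A k" using F_An_range[OF k2 step(4)] by simp
  have "(F ^^ Suc k) x = (F ^^ k) (F x)" by (simp only: funpow_Suc_right comp_apply)
  also have "\<dots> = (t k - F x) / a k" using step(3)[OF Fx] .
  also have "F x = a k * (x - t (Suc (Suc k))) / a (Suc k) + t (Suc k)"
    using F_An[OF k2 step(4)] by simp
  finally have eq: "(F ^^ Suc k) x = (t k - (a k * (x - t (Suc (Suc k))) / a (Suc k) + t (Suc k))) / a k" .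
  have ak: "a k > 0" "a (Suc k) > 0" using pos step(1) by auto
  have r1: "t k = a k + t (Suc k)" and r2: "t (Suc k) = a (Suc k) + t (Suc (Suc k))" using t_rec[of k] t_rec[of "Suc k"] by auto
  show ?case unfolding eq by (rule alg[OF ak r1 r2])
qed

lemma F_surj: "y \<in> {0..1} \<Longrightarrow> \<exists>x\<in>{0..1}. F x = y"
proof -
  assume y: "y \<in> {0..1}"
  have a1: "0 < a 1" "0 < a 2" using pos by auto
  have t2: "0 < t 2" using t_pos by simp
  show ?thesis
  proof (cases "y = 1")
    case True
    have r: "t 2 = a 2 + t (Suc 2)" by (rule t_rec)
    have mem: "t 2 \<in> A 2" unfolding part_int_def using r a1 by simp
    have "F (t 2) = a (2 - 1) * (t 2 - t (Suc 2)) / a 2 + t 2" by (rule F_An[OF _ mem]) simp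
    also have "a (2 - 1) * (t 2 - t (Suc 2)) / a 2 = a 1" using r a1 by simp
    finally have "F (t 2) = 1" using t12 by simp
    thus ?thesis using True t2 t_le1[of 2] by (intro bexI[of _ "t 2"]) auto
  next
    case False
    hence y1: "y < 1" using y by simp
    have "a 1 * y < a 1 * 1" using y1 a1 by (intro mult_strict_left_mono) auto
    moreover have "0 \<le> a 1 * y" using y a1 by simp
    ultimately have "t 2 < 1 - a 1 * y" "1 - a 1 * y \<le> 1" using t12 by auto
    hence "1 - a 1 * y \<in> A 1" using A1_eq by simp
    moreover have "F (1 - a 1 * y) = y" using F_A1[OF calculation] a1 by simp
    ultimately show ?thesis using A_sub[of 1] by (intro bexI[of _ "1 - a 1 * y"]) auto
  qed
qed

lemma Fn_surj: "y \<in> {0..1} \<Longrightarrow> \<exists>x\<in>{0..1}. (F ^^ n) x = y"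
proof (induction n arbitrary: y)
  case 0 then show ?case by auto
next
  case (Suc n)
  then obtain z where z: "z \<in> {0..1}" "(F ^^ n) z = y" by blast
  then obtain x where x: "x \<in> {0..1}" "F x = z" using F_surj by blast
  have "(F ^^ Suc n) x = y" using x z by (simp only: funpow_Suc_right comp_apply)
  then show ?case using x by blast
qed

lemma F_An': "x \<in> A (Suc (Suc m)) \<Longrightarrow> F x = a (Suc m) * (x - t (Suc (Suc (Suc m)))) / a (Suc (Suc m)) + t (Suc (Suc m))"
  using F_An[of "Suc (Suc m)" x] by simp

lemma F_meas_borel: "F \<in> borel_measurable U_meas"
proof (rule measurable_piecewise_restrict[where C = "insert {0} (range (\<lambda>n. A (Suc n)))"])
  show "countable (insert {0} (range (\<lambda>n. A (Suc n))))" by simp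
  show "\<Omega> \<inter> space U_meas \<in> sets U_meas" if "\<Omega> \<in> insert {0} (range (\<lambda>n. A (Suc n)))" for \<Omega>
  proof -
    have "\<Omega> = {0} \<or> (\<exists>n. \<Omega> = A (Suc n))" using that by blast
    hence "\<Omega> \<in> sets borel" by (auto simp: part_int_def)
    hence "\<Omega> \<inter> {0..1} \<in> sets U_meas" unfolding U_meas_def by (subst sets_restrict_space_iff) auto
    thus ?thesis unfolding U_meas_def by (simp add: space_restrict_space)
  qed
  show "space U_meas \<subseteq> \<Union> (insert {0} (range (\<lambda>n. A (Suc n))))"
  proof
    fix x assume "x \<in> space U_meas"
    hence x: "x \<in> {0..1}" by (simp add: U_meas_def)
    show "x \<in> \<Union> (insert {0} (range (\<lambda>n. A (Suc n))))"
    proof (cases "x = 0")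
      case False
      hence "0 < x" "x \<le> 1" using x by auto
      then obtain n where "n \<ge> 1" "x \<in> A n" using A_ex by blast
      then show ?thesis by (cases n) auto
    qed simp
  qed
  show "F \<in> borel_measurable (restrict_space U_meas \<Omega>)" if "\<Omega> \<in> insert {0} (range (\<lambda>n. A (Suc n)))" for \<Omega>
  proof -
    have "\<Omega> = {0} \<or> (\<exists>n. \<Omega> = A (Suc n))" using that by blast
    then consider "\<Omega> = {0}" | n where "\<Omega> = A (Suc n)" by blast
    then show ?thesis
    proof cases
      case 1
      have "(\<lambda>x. 0::real) \<in> borel_measurable (restrict_space U_meas \<Omega>)" by simp
      then show ?thesis
        by (subst measurable_cong[where g="\<lambda>x. 0"]) (auto simp: 1 space_restrict_space F_alpha_def)
    next
      case (2 n)
      show ?thesis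
      proof (cases n)
        case 0
        have "(\<lambda>x. (1 - x) / a 1) \<in> borel_measurable (restrict_space U_meas \<Omega>)"
          by (intro measurable_restrict_space1) (simp add: U_meas_def measurable_restrict_space1)
        then show ?thesis
          by (subst measurable_cong[where g="\<lambda>x. (1 - x) / a 1"]) (auto simp: 2 0 space_restrict_space F_A1)
      next
        case (Suc m)
        have "(\<lambda>x. a (Suc n - 1) * (x - t (Suc (Suc n))) / a (Suc n) + t (Suc n)) \<in> borel_measurable (restrict_space U_meas \<Omega>)"
          by (intro measurable_restrict_space1) (simp add: U_meas_def measurable_restrict_space1)
        then show ?thesis
          by (subst measurable_cong[where g="\<lambda>x. a (Suc n - 1) * (x - t (Suc (Suc n))) / a (Suc n) + t (Suc n)"])
             (auto simp: 2 Suc space_restrict_space F_An')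
      qed
    qed
  qed
qed

lemma F_meas: "F \<in> U_meas \<rightarrow>\<^sub>M U_meas"
proof -
  have 1: "F \<in> restrict_space lborel {0..1} \<rightarrow>\<^sub>M lborel" using F_meas_borel by (simp add: U_meas_def)
  have 2: "F \<in> space (restrict_space lborel {0..1}) \<rightarrow> {0..1}" using F_range by (auto simp: space_restrict_space)
  show ?thesis unfolding U_meas_def by (rule measurable_restrict_space2[OF 2 1])
qed

end



lemma aff_emeasure:
  fixes c s :: real
  assumes c: "c \<noteq> 0" and S: "S \<in> sets borel"
  shows "emeasure lborel S = ennreal \<bar>c\<bar> * emeasure lborel ((\<lambda>x. s + c * x) -` S)"
proof -
  have eq: "lborel = density (distr lborel borel (\<lambda>x. s + c * x)) (\<lambda>_. ennreal \<bar>c\<bar>)"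
    by (rule lborel_real_affine[OF c])
  have "emeasure lborel S = emeasure (density (distr lborel borel (\<lambda>x. s + c * x)) (\<lambda>_. ennreal \<bar>c\<bar>)) S"
    using arg_cong[where f="\<lambda>M. emeasure M S", OF eq] .
  also have "\<dots> = ennreal \<bar>c\<bar> * emeasure (distr lborel borel (\<lambda>x. s + c * x)) S"
    using S by (simp add: emeasure_density nn_integral_cmult_indicator)
  also have "\<dots> = ennreal \<bar>c\<bar> * emeasure lborel ((\<lambda>x. s + c * x) -` S)"
    using S by (simp add: emeasure_distr)
  finally show ?thesis .
qed

lemma sets_U: "S \<in> sets U_meas \<longleftrightarrow> S \<subseteq> {0..1} \<and> S \<in> sets borel"
  unfolding U_meas_def by (subst sets_restrict_space_iff) auto

lemma space_U: "space U_meas = {0..1}"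
  unfolding U_meas_def by (simp add: space_restrict_space)

lemma em_U: "X \<subseteq> {0..1} \<Longrightarrow> emeasure U_meas X = emeasure lborel X"
  unfolding U_meas_def by (rule emeasure_restrict_space) auto

lemma drop1: fixes E :: "real set" shows "E \<in> sets borel \<Longrightarrow> emeasure lborel (E \<inter> {0..<1}) = emeasure lborel (E \<inter> {0..1})"
proof -
  assume E: "E \<in> sets borel"
  have "E \<inter> {0..<1} = (E \<inter> {0..1}) - {1}" by auto
  moreover have "{1::real} \<in> null_sets lborel" by (rule finite_imp_null_set_lborel) simp
  ultimately show ?thesis using E by (simp add: emeasure_Diff_null_set)
qed

context alf begin

lemma central_set: "1 \<le> k \<Longrightarrow> {x \<in> A k. (t k - x) / a k \<in> E} = (\<lambda>x. t k / a k + (-1 / a k) * x) -` (E \<inter> {0..<1})"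
proof -
  assume k: "1 \<le> k"
  have ak: "a k > 0" using pos k by simp
  have r: "t k = a k + t (Suc k)" by (rule t_rec)
  have e: "\<And>x. t k / a k + (-1 / a k) * x = (t k - x) / a k" using ak by (simp add: field_simps)
  have m: "x \<in> A k \<longleftrightarrow> (t k - x) / a k \<in> {0..<1}" for x
  proof -
    have "(t k - x) / a k \<in> {0..<1} \<longleftrightarrow> 0 \<le> t k - x \<and> t k - x < a k"
      using ak by (simp add: zero_le_divide_iff pos_divide_less_eq)
    also have "\<dots> \<longleftrightarrow> x \<in> A k" unfolding part_int_def using r by auto
    finally show ?thesis by simp
  qed
  show ?thesis
  proof (rule set_eqI)
    fix x
    show "x \<in> {x \<in> A k. (t k - x) / a k \<in> E} \<longleftrightarrow> x \<in> (\<lambda>x. t k / a k + (-1 / a k) * x) -` (E \<inter> {0..<1})"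
      unfolding mem_Collect_eq vimage_eq e m Int_iff by blast
  qed
qed

lemma central: assumes k: "1 \<le> k" and E: "E \<in> sets borel"
  shows "emeasure lborel {x \<in> A k. (t k - x) / a k \<in> E} = ennreal (a k) * emeasure lborel (E \<inter> {0..<1})"
proof -
  have ak: "a k > 0" using pos k by simp
  have E': "E \<inter> {0..<1} \<in> sets borel" using E by simp
  have ab: "\<bar>-1 / a k\<bar> = 1 / a k" using ak by simp
  have h1: "emeasure lborel (E \<inter> {0..<1}) = ennreal (1 / a k) * emeasure lborel {x \<in> A k. (t k - x) / a k \<in> E}"
    unfolding central_set[OF k] ab[symmetric] by (rule aff_emeasure[OF _ E']) (use ak in simp)
  have h2: "ennreal (a k) * emeasure lborel (E \<inter> {0..<1}) = (ennreal (a k) * ennreal (1 / a k)) * emeasure lborel {x \<in> A k. (t k - x) / a k \<in> E}"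
    by (simp only: h1 mult.assoc)
  have "ennreal (a k) * ennreal (1 / a k) = ennreal (a k * (1 / a k))"
    by (rule ennreal_mult[symmetric]) (use ak in auto)
  also have "\<dots> = 1" using ak by simp
  finally show ?thesis using h2 by simp
qed

lemma central_real: assumes k: "1 \<le> k" and E: "E \<in> sets borel" and Esub: "E \<subseteq> {0..1}"
  shows "measure lborel {x \<in> A k. (t k - x) / a k \<in> E} = a k * measure lborel E"
proof -
  have ak: "a k > 0" using pos k by simp
  have "emeasure lborel (E \<inter> {0..<1}) = emeasure lborel E"
    using drop1[OF E] Esub by (simp add: Int_absorb2)
  thus ?thesis using central[OF k E] ak by (simp add: measure_def enn2real_mult)
qed

definition cc :: "nat \<Rightarrow> real" where "cc n = (if n = 0 then -1 / a 1 else a n / a (Suc n))"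
definition ss :: "nat \<Rightarrow> real" where "ss n = (if n = 0 then 1 / a 1 else t (Suc n) - a n * t (Suc (Suc n)) / a (Suc n))"

lemma F_aff: "x \<in> A (Suc n) \<Longrightarrow> F x = ss n + cc n * x"
proof (cases n)
  case 0
  assume x: "x \<in> A (Suc n)"
  have "a 1 > 0" using pos by simp
  thus ?thesis using F_A1[of x] x 0 by (simp add: ss_def cc_def field_simps)
next
  case (Suc m)
  assume x: "x \<in> A (Suc n)"
  have "a (Suc n) > 0" using pos by simp
  moreover have "F x = a n * (x - t (Suc (Suc n))) / a (Suc n) + t (Suc n)"
    using F_An[of "Suc n" x] x Suc by simp
  ultimately show ?thesis using Suc by (simp add: ss_def cc_def field_simps)
qed

lemma cc_nz: "cc n \<noteq> 0"
  using pos[of n] pos[of "Suc n"] pos[of 1] by (cases n) (auto simp: cc_def)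

lemma nonsing: "nonsingular U_meas F"
  unfolding nonsingular_def
proof (intro conjI ballI)
  show "F \<in> U_meas \<rightarrow>\<^sub>M U_meas" by (rule F_meas)
  fix S assume S: "S \<in> sets U_meas"
  hence Ssub: "S \<subseteq> {0..1}" and Sb: "S \<in> sets borel" using sets_U by auto
  have pre: "F -` S \<inter> space U_meas \<in> sets U_meas" using measurable_sets[OF F_meas S] .
  hence preb: "F -` S \<inter> {0..1} \<in> sets borel" using sets_U space_U by auto
  have e1: "emeasure U_meas (F -` S \<inter> space U_meas) = emeasure lborel (F -` S \<inter> {0..1})"
    by (simp add: space_U em_U)
  have e2: "emeasure U_meas S = emeasure lborel S" using em_U[OF Ssub] .
  show "emeasure U_meas (F -` S \<inter> space U_meas) = 0 \<longleftrightarrow> emeasure U_meas S = 0"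
    unfolding e1 e2
  proof
    assume h: "emeasure lborel (F -` S \<inter> {0..1}) = 0"
    have sub: "{x \<in> A 1. (t 1 - x) / a 1 \<in> S} \<subseteq> F -` S \<inter> {0..1}"
      using F_A1 A_sub[of 1] t1 by auto
    have "emeasure lborel {x \<in> A 1. (t 1 - x) / a 1 \<in> S} \<le> emeasure lborel (F -` S \<inter> {0..1})"
      by (rule emeasure_mono[OF sub]) (use preb in simp)
    hence "emeasure lborel {x \<in> A 1. (t 1 - x) / a 1 \<in> S} = 0" using h by simp
    hence "ennreal (a 1) * emeasure lborel (S \<inter> {0..<1}) = 0" using central[of 1 S] Sb by simp
    moreover have "a 1 > 0" using pos by simp
    ultimately have "emeasure lborel (S \<inter> {0..<1}) = 0" by simp
    thus "emeasure lborel S = 0" using drop1[OF Sb] Ssub by (simp add: Int_absorb2)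
  next
    assume h: "emeasure lborel S = 0"
    define P where "P n = (\<lambda>x. ss n + cc n * x) -` S" for n
    have Pn: "P n \<in> null_sets lborel" for n
    proof -
      have fm: "(\<lambda>x. ss n + cc n * x) \<in> borel \<rightarrow>\<^sub>M borel" by simp
      have Pm: "P n \<in> sets borel" unfolding P_def using measurable_sets[OF fm Sb] by simp
      have "0 = ennreal \<bar>cc n\<bar> * emeasure lborel (P n)"
        using aff_emeasure[OF cc_nz[of n] Sb, of "ss n"] h by (simp add: P_def)
      hence "emeasure lborel (P n) = 0" using cc_nz[of n] by simp
      thus ?thesis using Pm by (simp add: null_sets_def)
    qed
    have N0: "{0::real} \<in> null_sets lborel" by (rule finite_imp_null_set_lborel) simp
    have NU: "(\<Union>n. P n) \<in> null_sets lborel" using Pn by (rule null_sets_UN)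
    have N: "{0} \<union> (\<Union>n. P n) \<in> null_sets lborel" using N0 NU by (rule null_sets.Un)
    have "F -` S \<inter> {0..1} \<subseteq> {0} \<union> (\<Union>n. P n)"
    proof
      fix x assume x: "x \<in> F -` S \<inter> {0..1}"
      show "x \<in> {0} \<union> (\<Union>n. P n)"
      proof (cases "x = 0")
        case False
        hence "0 < x" "x \<le> 1" using x by auto
        then obtain n where n: "n \<ge> 1" "x \<in> A n" using A_ex by blast
        then obtain m where m: "n = Suc m" by (cases n) auto
        have "F x = ss m + cc m * x" using F_aff n m by simp
        hence "x \<in> P m" using x by (simp add: P_def)
        thus ?thesis by auto
      qed simp
    qed
    hence "F -` S \<inter> {0..1} \<in> null_sets lborel" using null_sets_subset[OF N] preb by simp
    thus "emeasure lborel (F -` S \<inter> {0..1}) = 0" by (rule null_setsD1)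
  qed
qed

end


context alf begin

lemma a1_pos: "0 < a 1" using pos by simp
lemma a1_le: "a 1 \<le> 1" using t12 t_pos[of 2] by simp

lemma tail_sums: "(\<lambda>k. a (Suc (Suc k))) sums (1 - a 1)"
  using total sums_Suc_iff[of "\<lambda>k. a (Suc k)" "1 - a 1"] by simp

lemma harm_step:
  fixes D :: "nat \<Rightarrow> real"
  assumes harm: "\<And>n. (\<lambda>k. a (Suc k) * D (n + Suc k)) sums D n"
    and up: "\<And>n. D n \<le> S" and m: "D m > S - e"
  shows "D (Suc m) > S - e / a 1"
proof -
  have h: "(\<lambda>k. a (Suc (Suc k)) * D (m + Suc (Suc k))) sums (D m - a 1 * D (Suc m))"
    using harm[of m] sums_Suc_iff[of "\<lambda>k. a (Suc k) * D (m + Suc k)" "D m - a 1 * D (Suc m)"] by simp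
  have g: "(\<lambda>k. a (Suc (Suc k)) * S) sums ((1 - a 1) * S)"
    using sums_mult2[OF tail_sums, of S] .
  have "D m - a 1 * D (Suc m) \<le> (1 - a 1) * S"
    by (rule sums_le[OF _ h g]) (use up pos in \<open>auto intro: mult_left_mono\<close>)
  hence "a 1 * D (Suc m) > a 1 * S - e" using m by (simp add: algebra_simps)
  hence "a 1 * D (Suc m) > a 1 * (S - e / a 1)" using a1_pos by (simp add: algebra_simps)
  thus ?thesis using a1_pos by simp
qed

lemma harm_iter:
  fixes D :: "nat \<Rightarrow> real"
  assumes harm: "\<And>n. (\<lambda>k. a (Suc k) * D (n + Suc k)) sums D n"
    and up: "\<And>n. D n \<le> S" and m: "D m > S - e"
  shows "D (m + i) > S - e / a 1 ^ i"
proof (induction i)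
  case 0 then show ?case using m by simp
next
  case (Suc i)
  have "D (Suc (m + i)) > S - (e / a 1 ^ i) / a 1"
    by (rule harm_step[OF harm up Suc])
  thus ?case by (simp add: field_simps)
qed

lemma telesc: "(\<Sum>i<K. (f (m + i) - f (Suc (m + i)))) = f m - (f (m + K) :: real)"
  by (induction K) auto

lemma harm_mono:
  fixes phi :: "nat \<Rightarrow> real"
  assumes bd: "\<And>n. \<bar>phi n\<bar> \<le> 1"
    and harm: "\<And>n. (\<lambda>k. a (Suc k) * phi (n + Suc k)) sums phi n"
  shows "phi n \<le> phi (Suc n)"
proof (rule ccontr)
  assume "\<not> phi n \<le> phi (Suc n)"
  define D where "D j = phi j - phi (Suc j)" for j
  have Dn: "D n > 0" using \<open>\<not> phi n \<le> phi (Suc n)\<close> by (simp add: D_def)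
  have hD: "(\<lambda>k. a (Suc k) * D (j + Suc k)) sums D j" for j
  proof -
    have "(\<lambda>k. a (Suc k) * phi (j + Suc k) - a (Suc k) * phi (Suc j + Suc k)) sums (phi j - phi (Suc j))"
      by (rule sums_diff[OF harm harm])
    thus ?thesis by (simp add: D_def right_diff_distrib)
  qed
  have Dbd: "\<bar>D j\<bar> \<le> 2" for j using bd[of j] bd[of "Suc j"] by (simp add: D_def)
  have bdd: "bdd_above (range D)" using Dbd by (intro bdd_aboveI[of _ 2]) (auto simp: abs_le_iff)
  define S where "S = (SUP j. D j)"
  have up: "D j \<le> S" for j unfolding S_def by (rule cSUP_upper[OF _ bdd]) simp
  have Spos: "S > 0" using up[of n] Dn by simp
  obtain K :: nat where K: "4 < real K * S"
    using reals_Archimedean3[OF Spos] by blast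
  define e where "e = a 1 ^ K * S / 2"
  have epos: "e > 0" using a1_pos Spos by (simp add: e_def)
  have "S - e < S" using epos by simp
  then obtain m where m: "S - e < D m" unfolding S_def using less_cSUP_iff[OF _ bdd] by auto
  have big: "D (m + i) > S / 2" if i: "i < K" for i
  proof -
    have "a 1 ^ K \<le> a 1 ^ i" using i a1_pos a1_le by (intro power_decreasing) auto
    hence "e / a 1 ^ i \<le> e / a 1 ^ K" using epos a1_pos
      by (intro divide_left_mono) (auto intro: mult_pos_pos)
    also have "\<dots> = S / 2" using a1_pos by (simp add: e_def)
    finally show ?thesis using harm_iter[OF hD up m, of i] by simp
  qed
  have "(\<Sum>i<K. S / 2) \<le> (\<Sum>i<K. D (m + i))"
    using big by (intro sum_mono) (simp add: less_imp_le)
  also have "\<dots> = phi m - phi (m + K)" unfolding D_def by (rule telesc)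
  also have "\<dots> \<le> 2" using bd[of m] bd[of "m + K"] by (simp add: abs_le_iff)
  finally have "real K * S / 2 \<le> 2" by simp
  thus False using K by simp
qed

lemma harm_const:
  fixes phi :: "nat \<Rightarrow> real"
  assumes bd: "\<And>n. \<bar>phi n\<bar> \<le> 1"
    and harm: "\<And>n. (\<lambda>k. a (Suc k) * phi (n + Suc k)) sums phi n"
  shows "phi n = phi 0"
proof -
  have s: "phi j = phi (Suc j)" for j
  proof -
    have "phi j \<le> phi (Suc j)" by (rule harm_mono[OF bd harm])
    moreover have "- phi j \<le> - phi (Suc j)"
    proof (rule harm_mono[where phi = "\<lambda>j. - phi j"])
      show "\<bar>- phi n\<bar> \<le> 1" for n using bd[of n] by simp
      show "(\<lambda>k. a (Suc k) * - phi (n + Suc k)) sums - phi n" for n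
        using sums_minus[OF harm[of n]] by simp
    qed
    ultimately show ?thesis by simp
  qed
  show ?thesis by (induction n) (use s in auto)
qed

end


lemma fin01: "S \<subseteq> {0..1::real} \<Longrightarrow> emeasure lborel S \<noteq> \<infinity>"
proof -
  assume S: "S \<subseteq> {0..1::real}"
  have "emeasure lborel S \<le> emeasure lborel {0..1::real}" by (rule emeasure_mono[OF S]) simp
  thus ?thesis by (auto simp: top_unique)
qed

lemma meas01: "S \<subseteq> {0..1::real} \<Longrightarrow> S \<in> sets borel \<Longrightarrow> measure lborel S \<le> 1"
proof -
  assume S: "S \<subseteq> {0..1::real}" "S \<in> sets borel"
  have "measure lborel S \<le> measure lborel {0..1::real}"
    by (rule measure_mono_fmeasurable[OF S(1)]) (use S(2) in \<open>auto simp: fmeasurable_def\<close>)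
  thus ?thesis by simp
qed

lemma sets_borel_atMost: "sets (borel :: real measure) = sigma_sets UNIV (range (\<lambda>a. {..a}))"
  by (subst borel_eq_atMost) (simp add: sets_measure_of)

lemma em_dens_ind: "B \<in> sets borel \<Longrightarrow> X \<in> sets borel \<Longrightarrow>
   emeasure (density lborel (indicator B)) X = emeasure lborel (B \<inter> (X :: real set))"
  by (simp add: emeasure_density indicator_inter_arith[symmetric] Int_commute)

lemma em_dens_c: "X \<in> sets borel \<Longrightarrow>
   emeasure (density lborel (\<lambda>x. ennreal c * indicator {0..1} x)) X = ennreal c * emeasure lborel ({0..1} \<inter> (X :: real set))"
  by (simp add: emeasure_density nn_integral_cmult indicator_inter_arith[symmetric] Int_commute mult.assoc)

lemma unique_c:
  fixes B :: "real set" and c :: real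
  assumes B: "B \<in> sets borel" "B \<subseteq> {0..1}" and c: "0 \<le> c"
    and g: "\<And>v. v \<in> {0..1} \<Longrightarrow> measure lborel (B \<inter> {..v}) = c * v"
  shows "measure lborel B = c * measure lborel B"
proof -
  define M1 where "M1 = density lborel (indicator B)"
  define M2 where "M2 = density lborel (\<lambda>x. ennreal c * indicator {0..1::real} x)"
  have eq: "emeasure M1 {..v} = emeasure M2 {..v}" for v :: real
  proof -
    have e1: "emeasure M1 {..v} = emeasure lborel (B \<inter> {..v})" unfolding M1_def using B by (simp add: em_dens_ind)
    have e2: "emeasure M2 {..v} = ennreal c * emeasure lborel ({0..1} \<inter> {..v})" unfolding M2_def by (simp add: em_dens_c)
    consider "v < 0" | "v \<in> {0..1}" | "1 < v" by force
    then show ?thesis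
    proof cases
      case 1
      hence "B \<inter> {..v} = {}" "{0..1} \<inter> {..v} = {}" using B by auto
      then show ?thesis unfolding e1 e2 by simp
    next
      case 2
      have "emeasure lborel (B \<inter> {..v}) = ennreal (measure lborel (B \<inter> {..v}))"
        using fin01[of "B \<inter> {..v}"] B by (intro emeasure_eq_ennreal_measure) auto
      also have "\<dots> = ennreal (c * v)" using g[OF 2] by simp
      also have "\<dots> = ennreal c * ennreal v" using c 2 by (simp add: ennreal_mult)
      also have "ennreal v = emeasure lborel ({0..1} \<inter> {..v})"
      proof -
        have "{0..1} \<inter> {..v} = {0..v}" using 2 by auto
        thus ?thesis using 2 by simp
      qed
      finally show ?thesis unfolding e1 e2 .
    next
      case 3
      hence s: "B \<inter> {..v} = B \<inter> {..1}" "{0..1} \<inter> {..v} = {0..1}" using B by auto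
      have "emeasure lborel (B \<inter> {..1}) = ennreal (measure lborel (B \<inter> {..1}))"
        using fin01[of "B \<inter> {..1}"] B by (intro emeasure_eq_ennreal_measure) auto
      also have "\<dots> = ennreal c" using g[of 1] by simp
      finally show ?thesis unfolding e1 e2 s by simp
    qed
  qed
  have M12: "M1 = M2"
  proof (rule measure_eqI_generator_eq[where \<Omega> = UNIV and E = "range (\<lambda>a. {..a})" and A = "\<lambda>i. {..real i}"])
    show "Int_stable (range (\<lambda>a. {..a::real}))"
      unfolding Int_stable_def
    proof (clarify)
      fix x y :: real
      show "{..x} \<inter> {..y} \<in> range (\<lambda>a. {..a})" by (rule range_eqI[of _ _ "min x y"]) auto
    qed
    show "range (\<lambda>a. {..a::real}) \<subseteq> Pow UNIV" by simp
    show "\<And>X. X \<in> range (\<lambda>a. {..a}) \<Longrightarrow> emeasure M1 X = emeasure M2 X" using eq by auto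
    show "sets M1 = sigma_sets UNIV (range (\<lambda>a. {..a}))" unfolding M1_def by (simp add: sets_borel_atMost)
    show "sets M2 = sigma_sets UNIV (range (\<lambda>a. {..a}))" unfolding M2_def by (simp add: sets_borel_atMost)
    show "range (\<lambda>i. {..real i}) \<subseteq> range (\<lambda>a. {..a})" by auto
    show "(\<Union>i. {..real i}) = UNIV" by (auto intro: real_arch_simple)
    show "emeasure M1 {..real i} \<noteq> \<infinity>" for i
    proof -
      have "B \<inter> {..real i} \<subseteq> {0..1}" using B by auto
      thus ?thesis unfolding M1_def using B fin01[of "B \<inter> {..real i}"] by (simp add: em_dens_ind)
    qed
  qed
  have "emeasure M1 B = emeasure M2 B" using M12 by simp
  hence "emeasure lborel B = ennreal c * emeasure lborel B"
    unfolding M1_def M2_def using B by (simp add: em_dens_ind em_dens_c Int_absorb1)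
  moreover have "emeasure lborel B = ennreal (measure lborel B)"
    using fin01[OF B(2)] by (intro emeasure_eq_ennreal_measure) (simp add: infinity_ennreal_def)
  ultimately have "ennreal (measure lborel B) = ennreal (c * measure lborel B)"
    using c by (simp add: ennreal_mult)
  thus ?thesis using c by (simp add: ennreal_inj)
qed



context alf begin

lemma A_borel: "A k \<in> sets borel" by (simp add: part_int_def)

lemma ak_le: "1 \<le> k \<Longrightarrow> a k \<le> max (a 1) (1 - a 1)"
proof -
  assume k: "1 \<le> k"
  show ?thesis
  proof (cases "k = 1")
    case False
    hence k2: "2 \<le> k" using k by simp
    have "a k \<le> t k" using t_rec[of k] t_nonneg[of "Suc k"] k by simp
    also have "\<dots> \<le> t 2" using t_mono[of 2 k] k2 by simp
    finally show ?thesis using t12 by simp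
  qed simp
qed

lemma rho_lt1: "max (a 1) (1 - a 1) < 1"
  using a1_pos t12 t_pos[of 2] by simp

lemma tail_main:
  fixes D :: "nat \<Rightarrow> real set"
  assumes Dsets: "\<And>n. D n \<in> sets borel" and Dsub: "\<And>n. D n \<subseteq> {0..1}"
    and DR: "\<And>n. D n = F -` D (Suc n) \<inter> {0..1}"
  shows "measure lborel (D 0) = 0 \<or> measure lborel (D 0) = 1"
proof -
  have Rk: "D n = (F ^^ k) -` D (n + k) \<inter> {0..1}" for n k
  proof (induction k)
    case 0 then show ?case using Dsub[of n] by auto
  next
    case (Suc k)
    have "D n = (F ^^ k) -` (F -` D (Suc (n + k)) \<inter> {0..1}) \<inter> {0..1}"
      using Suc DR[of "n + k"] by simp
    also have "\<dots> = (F ^^ Suc k) -` D (n + Suc k) \<inter> {0..1}"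
      using Fn_range by auto
    finally show ?case .
  qed
  have piece: "D n \<inter> A k = {x \<in> A k. (t k - x) / a k \<in> D (n + k)}" if k: "1 \<le> k" for n k
  proof -
    have "D n \<inter> A k = (F ^^ k) -` D (n + k) \<inter> A k" using Rk[of n k] A_sub[OF k] by auto
    also have "\<dots> = {x \<in> A k. (t k - x) / a k \<in> D (n + k)}" using Fk_A[OF k] by auto
    finally show ?thesis .
  qed
  define phi where "phi j = measure lborel (D j)" for j
  have piece_meas: "measure lborel (D n \<inter> A k) = a k * phi (n + k)" if k: "1 \<le> k" for n k
    unfolding piece[OF k] phi_def by (rule central_real[OF k Dsets Dsub])
  have bd: "\<bar>phi j\<bar> \<le> 1" for j
    using meas01[OF Dsub Dsets] by (simp add: phi_def)
  have harm: "(\<lambda>k. a (Suc k) * phi (n + Suc k)) sums phi n" for n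
  proof -
    define P where "P k = D n \<inter> A (Suc k)" for k
    have Pm: "range P \<subseteq> sets lborel" using Dsets A_borel by (auto simp: P_def)
    have Pd: "disjoint_family P"
      unfolding disjoint_family_on_def P_def using A_disj by fastforce
    have UP: "(\<Union>k. P k) = D n - {0}"
    proof
      show "(\<Union>k. P k) \<subseteq> D n - {0}" using A_sub by (force simp: P_def)
      show "D n - {0} \<subseteq> (\<Union>k. P k)"
      proof
        fix x assume x: "x \<in> D n - {0}"
        hence "0 < x" "x \<le> 1" using Dsub[of n] by force+
        then obtain k where k: "k \<ge> 1" "x \<in> A k" using A_ex by blast
        then obtain j where "k = Suc j" by (cases k) auto
        thus "x \<in> (\<Union>k. P k)" using x k by (auto simp: P_def)
      qed
    qed
    have fin: "emeasure lborel (\<Union>k. P k) \<noteq> \<infinity>"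
      using fin01[of "\<Union>k. P k"] UP Dsub[of n] by (auto simp: infinity_ennreal_def)
    have "(\<lambda>k. measure lborel (P k)) sums measure lborel (\<Union>k. P k)"
      by (rule measure_UNION[OF Pm Pd fin])
    moreover have "measure lborel (\<Union>k. P k) = phi n"
    proof -
      have "{0::real} \<in> null_sets lborel" by (rule finite_imp_null_set_lborel) simp
      thus ?thesis unfolding UP phi_def using Dsets[of n] by (simp add: measure_Diff_null_set)
    qed
    moreover have "measure lborel (P k) = a (Suc k) * phi (n + Suc k)" for k
      unfolding P_def by (rule piece_meas) simp
    ultimately show ?thesis by simp
  qed
  define c where "c = phi 0"
  have const: "phi n = c" for n unfolding c_def by (rule harm_const[OF bd harm])
  have c01: "0 \<le> c" "c \<le> 1" using bd[of 0] by (auto simp: c_def phi_def)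
  have ak_pos: "1 \<le> k \<Longrightarrow> 0 < a k" for k using pos by simp
  have tle: "t (Suc k) \<le> t k" if "1 \<le> k" for k using t_rec[of k] ak_pos[OF that] by simp
  have finD: "emeasure lborel (D n \<inter> X) \<noteq> \<infinity>" for n X
    using fin01[of "D n \<inter> X"] Dsub[of n] by auto
  have hk: "measure lborel (D n \<inter> {..t k}) = c * t k" if k: "1 \<le> k" for n k
    using k
  proof (induction k rule: dec_induct)
    case base
    have "D n \<inter> {..t 1} = D n" using Dsub[of n] t1 by auto
    then show ?case using const[of n] t1 by (simp add: phi_def)
  next
    case (step k)
    have un: "D n \<inter> {..t k} = (D n \<inter> {..t (Suc k)}) \<union> (D n \<inter> A k)"
      using tle[OF step(1)] by (auto simp: part_int_def)
    have dj: "(D n \<inter> {..t (Suc k)}) \<inter> (D n \<inter> A k) = {}" by (auto simp: part_int_def)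
    have "c * t k = measure lborel (D n \<inter> {..t (Suc k)}) + measure lborel (D n \<inter> A k)"
      unfolding step(3)[symmetric] un
      by (rule measure_Union) (use finD Dsets[of n] A_borel dj in auto)
    also have "measure lborel (D n \<inter> A k) = a k * c" using piece_meas[OF step(1)] const by simp
    finally show ?case using t_rec[of k] by (simp add: algebra_simps)
  qed
  define g where "g n v = measure lborel (D n \<inter> {..v})" for n v
  have g01: "0 \<le> g n v" "g n v \<le> 1" for n v
    unfolding g_def using meas01[of "D n \<inter> {..v}"] Dsub[of n] Dsets[of n] by auto
  have lessw: "measure lborel (D j \<inter> {..<w}) = g j w" for j w
  proof -
    have "{w::real} \<in> null_sets lborel" by (rule finite_imp_null_set_lborel) simp
    moreover have "D j \<inter> {..w} = (D j \<inter> {..<w}) \<union> (D j \<inter> {w})" by auto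
    ultimately have "measure lborel (D j \<inter> {..w}) = measure lborel (D j \<inter> {..<w})"
      using Dsets[of j] measure_Un_null_set[of "D j \<inter> {..<w}" lborel "D j \<inter> {w}"]
        null_sets_subset[of "{w}" lborel "D j \<inter> {w}"] by auto
    thus ?thesis by (simp add: g_def)
  qed
  have key: "g n v - c * v = - a k * (g (n + k) ((t k - v) / a k) - c * ((t k - v) / a k))"
    if k: "1 \<le> k" and v: "v \<in> A k" for n k v
  proof -
    define w where "w = (t k - v) / a k"
    have akp: "0 < a k" using ak_pos[OF k] .
    have vw: "v = t k - a k * w" using akp by (simp add: w_def)
    have iff: "(t k - x) / a k \<ge> w \<longleftrightarrow> x \<le> v" for x
      unfolding w_def using akp by (simp add: divide_le_cancel)
    define R where "R = {x \<in> A k. (t k - x) / a k \<in> D (n + k) \<inter> {w..}}"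
    have un: "D n \<inter> {..v} = (D n \<inter> {..t (Suc k)}) \<union> R"
    proof
      show "D n \<inter> {..v} \<subseteq> (D n \<inter> {..t (Suc k)}) \<union> R"
      proof
        fix x assume x: "x \<in> D n \<inter> {..v}"
        show "x \<in> (D n \<inter> {..t (Suc k)}) \<union> R"
        proof (cases "x \<le> t (Suc k)")
          case False
          hence xA: "x \<in> A k" using x v by (auto simp: part_int_def)
          hence "x \<in> D n \<inter> A k" using x by auto
          hence "(t k - x) / a k \<in> D (n + k)" using piece[OF k] by auto
          moreover have "(t k - x) / a k \<ge> w" using iff x by auto
          ultimately show ?thesis using xA by (auto simp: R_def)
        qed (use x in auto)
      qed
      show "(D n \<inter> {..t (Suc k)}) \<union> R \<subseteq> D n \<inter> {..v}"
      proof
        fix x assume x: "x \<in> (D n \<inter> {..t (Suc k)}) \<union> R"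
        show "x \<in> D n \<inter> {..v}"
        proof (cases "x \<in> R")
          case True
          hence "x \<in> A k" "(t k - x) / a k \<in> D (n + k)" "(t k - x) / a k \<ge> w" by (auto simp: R_def)
          hence "x \<in> D n \<inter> A k" "x \<le> v" using piece[OF k, of n] iff by auto
          thus ?thesis by auto
        next
          case False
          hence "x \<in> D n" "x \<le> t (Suc k)" using x by auto
          moreover have "t (Suc k) \<le> v" using v by (auto simp: part_int_def)
          ultimately show ?thesis by auto
        qed
      qed
    qed
    have dj: "(D n \<inter> {..t (Suc k)}) \<inter> R = {}" by (auto simp: R_def part_int_def)
    have Rb: "R \<in> sets borel"
    proof -
      have "R = D n \<inter> {..v} - (D n \<inter> {..t (Suc k)})" using un dj by auto
      thus ?thesis using Dsets[of n] by simp
    qed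
    have Rsub: "R \<subseteq> {0..1}" using A_sub[OF k] by (auto simp: R_def)
    have gnv: "g n v = c * t (Suc k) + measure lborel R"
      unfolding g_def un hk[of "Suc k" n, simplified, symmetric]
      by (rule measure_Union) (use finD fin01[OF Rsub] Dsets[of n] Rb dj in \<open>auto simp: infinity_ennreal_def\<close>)
    have mR: "measure lborel R = a k * measure lborel (D (n + k) \<inter> {w..})"
      unfolding R_def by (rule central_real[OF k]) (use Dsets[of "n + k"] Dsub[of "n + k"] in auto)
    have split: "D (n + k) = (D (n + k) \<inter> {..<w}) \<union> (D (n + k) \<inter> {w..})" by auto
    have "c = measure lborel ((D (n + k) \<inter> {..<w}) \<union> (D (n + k) \<inter> {w..}))"
      using const[of "n + k"] split by (simp add: phi_def)
    also have "\<dots> = g (n + k) w + measure lborel (D (n + k) \<inter> {w..})"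
      unfolding lessw[symmetric]
      by (rule measure_Union) (use finD Dsets[of "n + k"] in auto)
    finally have mw: "measure lborel (D (n + k) \<inter> {w..}) = c - g (n + k) w" by simp
    have tr: "t k = a k + t (Suc k)" by (rule t_rec)
    have e1: "g n v = c * t (Suc k) + a k * (c - g (n + k) w)" using gnv mR mw by simp
    have e2: "c * v = c * (t (Suc k) + a k - a k * w)" using vw tr by simp
    show ?thesis unfolding w_def[symmetric] using e1 e2 by (simp add: algebra_simps)
  qed
  define \<rho> where "\<rho> = max (a 1) (1 - a 1)"
  have rho0: "0 \<le> \<rho>" using a1_pos by (simp add: \<rho>_def)
  have bound: "\<forall>n v. v \<in> {0..1} \<longrightarrow> \<bar>g n v - c * v\<bar> \<le> \<rho> ^ j" for j
  proof (induction j)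
    case 0
    show ?case
    proof (intro allI impI)
      fix n v assume v: "v \<in> {0..(1::real)}"
      have "0 \<le> c * v" "c * v \<le> 1" using c01 v by (auto intro: mult_le_one)
      thus "\<bar>g n v - c * v\<bar> \<le> \<rho> ^ 0" using g01[of n v] by simp
    qed
  next
    case (Suc j)
    show ?case
    proof (intro allI impI)
      fix n v assume v: "v \<in> {0..(1::real)}"
      show "\<bar>g n v - c * v\<bar> \<le> \<rho> ^ Suc j"
      proof (cases "v = 0")
        case True
        have s0: "D n \<inter> {..0} \<subseteq> {0}" using Dsub[of n] by auto
        have n0: "{0::real} \<in> null_sets lborel" by (rule finite_imp_null_set_lborel) simp
        have m0: "D n \<inter> {..0} \<in> sets lborel" using Dsets[of n] by simp
        have "D n \<inter> {..0} \<in> null_sets lborel" using null_sets_subset[OF n0 m0 s0] .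
        hence "g n 0 = 0" by (simp add: g_def measure_def null_setsD1)
        thus ?thesis using True rho0 by simp
      next
        case False
        hence "0 < v" "v \<le> 1" using v by auto
        then obtain k where k: "1 \<le> k" "v \<in> A k" using A_ex by blast
        define w where "w = (t k - v) / a k"
        have akp: "0 < a k" using ak_pos[OF k(1)] .
        have "0 \<le> t k - v" "t k - v \<le> a k" using k(2) t_rec[of k] by (auto simp: part_int_def)
        hence w01: "w \<in> {0..1}" using akp by (simp add: w_def pos_divide_le_eq)
        have "\<bar>g n v - c * v\<bar> = a k * \<bar>g (n + k) w - c * w\<bar>"
          using key[OF k, of n] akp by (simp add: w_def abs_mult)
        also have "\<dots> \<le> \<rho> * \<rho> ^ j"
        proof (rule mult_mono)
          show "\<bar>g (n + k) w - c * w\<bar> \<le> \<rho> ^ j" using Suc.IH w01 by blast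
          show "a k \<le> \<rho>" using ak_le[OF k(1)] by (simp add: \<rho>_def)
        qed (use rho0 in auto)
        finally show ?thesis by simp
      qed
    qed
  qed
  have g0: "g 0 v = c * v" if v: "v \<in> {0..1}" for v
  proof (rule ccontr)
    assume "g 0 v \<noteq> c * v"
    hence "0 < \<bar>g 0 v - c * v\<bar>" by simp
    then obtain j where "\<rho> ^ j < \<bar>g 0 v - c * v\<bar>"
      using real_arch_pow_inv[of "\<bar>g 0 v - c * v\<bar>" \<rho>] rho_lt1 by (auto simp: \<rho>_def)
    moreover have "\<bar>g 0 v - c * v\<bar> \<le> \<rho> ^ j" using bound[of j] v by blast
    ultimately show False by linarith
  qed
  have "measure lborel (D 0) = c * measure lborel (D 0)"
    by (rule unique_c[OF Dsets Dsub c01(1)]) (use g0 in \<open>simp add: g_def\<close>)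
  moreover have "measure lborel (D 0) = c" using const[of 0] by (simp add: phi_def)
  ultimately have "c = c * c" by simp
  hence "c = 0 \<or> c = 1" by (metis mult_cancel_right1 mult_zero_left)
  thus ?thesis using const[of 0] by (auto simp: phi_def)
qed

end

theorem lemma2p6:
  fixes a :: "nat \<Rightarrow> real"
  assumes pos: "\<And>n. n \<ge> 1 \<Longrightarrow> a n > 0"
    and total: "(\<lambda>k. a (Suc k)) sums 1"
  shows "exact_transf U_meas (F_alpha a)"
proof -
  interpret alf a using pos total by unfold_locales auto
  show ?thesis
    unfolding exact_transf_def
  proof (intro conjI allI impI)
    show "nonsingular U_meas (F_alpha a)" by (rule nonsing)
    fix B assume hB: "\<forall>n. \<exists>C\<in>sets U_meas. B = (F_alpha a ^^ n) -` C \<inter> space U_meas"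
    then obtain D where D: "\<And>n. D n \<in> sets U_meas" "\<And>n. B = (F ^^ n) -` D n \<inter> {0..1}"
      unfolding space_U by metis
    have Dsets: "D n \<in> sets borel" and Dsub: "D n \<subseteq> {0..1}" for n using D(1)[of n] sets_U by auto
    have DR: "D n = F -` D (Suc n) \<inter> {0..1}" for n
    proof
      show "D n \<subseteq> F -` D (Suc n) \<inter> {0..1}"
      proof
        fix y assume y: "y \<in> D n"
        hence y01: "y \<in> {0..1}" using Dsub[of n] by blast
        then obtain x where x: "x \<in> {0..1}" "(F ^^ n) x = y" using Fn_surj by blast
        hence "x \<in> B" using D(2)[of n] y by auto
        hence "(F ^^ Suc n) x \<in> D (Suc n)" using D(2)[of "Suc n"] by auto
        thus "y \<in> F -` D (Suc n) \<inter> {0..1}" using x y01 by simp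
      qed
      show "F -` D (Suc n) \<inter> {0..1} \<subseteq> D n"
      proof
        fix y assume y: "y \<in> F -` D (Suc n) \<inter> {0..1}"
        then obtain x where x: "x \<in> {0..1}" "(F ^^ n) x = y" using Fn_surj by blast
        have "(F ^^ Suc n) x \<in> D (Suc n)" using x y by simp
        hence "x \<in> B" using D(2)[of "Suc n"] x by auto
        thus "y \<in> D n" using D(2)[of n] x by auto
      qed
    qed
    have B0: "B = D 0" using D(2)[of 0] Dsub[of 0] by auto
    have fin0: "emeasure lborel (D 0) = ennreal (measure lborel (D 0))"
      using fin01[OF Dsub[of 0]] by (intro emeasure_eq_ennreal_measure) (simp add: infinity_ennreal_def)
    have "measure lborel (D 0) = 0 \<or> measure lborel (D 0) = 1"
      by (rule tail_main[of D, OF Dsets Dsub DR])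
    thus "emeasure U_meas B = 0 \<or> emeasure U_meas (space U_meas - B) = 0"
    proof
      assume "measure lborel (D 0) = 0"
      hence "emeasure U_meas B = 0" unfolding B0 em_U[OF Dsub[of 0]] fin0 by simp
      thus ?thesis by simp
    next
      assume m1: "measure lborel (D 0) = 1"
      have "measure lborel ({0..1} - D 0) = measure lborel {0..1::real} - measure lborel (D 0)"
        by (rule measure_Diff) (use Dsets[of 0] Dsub[of 0] in auto)
      hence m0: "measure lborel ({0..1} - D 0) = 0" using m1 by simp
      have "emeasure lborel ({0..1} - D 0) = ennreal (measure lborel ({0..1} - D 0))"
        using fin01[of "{0..1} - D 0"] by (intro emeasure_eq_ennreal_measure) (auto simp: infinity_ennreal_def)
      hence "emeasure lborel ({0..1} - D 0) = 0" using m0 by simp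
      hence "emeasure U_meas (space U_meas - B) = 0" unfolding space_U B0 by (subst em_U) auto
      thus ?thesis by simp
    qed
  qed
qed

end
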